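(* For $n\ge0$ let $Q_n^L(x)=\sum_{r=0}^{n}\left[\binom{n}{r}\sum_{\ell=0}^{r}\binom{r}{\ell}\frac{1}{\ell!}\right](-x)^r$ (the coefficient polynomials of the linear transformation $x^n\mapsto L_n(x)$). Then for all $n\ge0$, $$(n+1)Q^L_{n+1}(x)=(x-2x^2+x^3)(Q^L_n)'(x)+(n+1-2x-nx^2)Q^L_n(x).$$
   Context: $L_n(x)=\sum_{k=0}^n\binom{n}{k}\frac{(-x)^k}{k!}$ is the $n$th Laguerre polynomial; coefficient polynomials $Q_k$ of a linear operator $T$ on $\mathbb{C}[x]$ are defined by the unique representation $T=\sum_k\frac{Q_k(x)}{k!}D^k$, $D=d/dx$. *)

theory Defs
  imports "HOL-Computational_Algebra.Polynomial"
begin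

definition QL :: "nat \<Rightarrow> complex poly" where
  "QL n = (\<Sum>r\<le>n. monom (of_nat (n choose r) *
              (\<Sum>l\<le>r. of_nat (r choose l) / of_nat (fact l)) * (-1) ^ r) r)"

end

theory Submission
  imports Defs
begin

definition sL :: "nat \<Rightarrow> complex" where
  "sL r = (\<Sum>l\<le>r. of_nat (r choose l) / of_nat (fact l))"

lemma binom_step: "(n - k) * (n choose k) = (k + 1) * (n choose (k + 1))"
proof (cases n)
  case 0 then show ?thesis by simp
next
  case (Suc m)
  have "(n - k) * (n choose k) = n * (m choose k)" using binomial_absorb_comp[of n k] Suc by simp
  also have "\<dots> = (n choose (k+1)) * (k+1)" using Suc_times_binomial_eq[of m k] Suc by simp
  finally show ?thesis by simp
qed

lemma binom_c: "(of_nat n - of_nat k) * (of_nat (n choose k) :: complex) = of_nat (k+1) * of_nat (n choose (k+1))"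
proof (cases "k \<le> n")
  case True
  have "of_nat ((n - k) * (n choose k)) = (of_nat ((k + 1) * (n choose (k + 1))) :: complex)"
    using binom_step by metis
  then show ?thesis using True by (simp add: of_nat_diff algebra_simps)
next
  case False then show ?thesis by (simp add: binomial_eq_0)
qed

lemma absorb_i: "(int (m+1) - int k) * int ((m+1) choose k) = int (m+1) * int (m choose k)"
proof (cases "k \<le> m + 1")
  case True
  have "int ((m + 1 - k) * ((m+1) choose k)) = int ((m+1) * (m choose k))"
    using binomial_absorb_comp[of "m+1" k] by simp
  then show ?thesis using True by (simp only: of_nat_mult of_nat_diff)
next
  case False then show ?thesis by (simp add: binomial_eq_0)
qed

lemma binom_c_i: "(int n - int k) * int (n choose k) = int (k+1) * int (n choose (k+1))"
proof (cases "k \<le> n")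
  case True
  have "int ((n - k) * (n choose k)) = int ((k + 1) * (n choose (k + 1)))"
    using binom_step by metis
  then show ?thesis using True by (simp only: of_nat_mult of_nat_diff)
next
  case False then show ?thesis by (simp add: binomial_eq_0)
qed

lemma binom_term_i:
  "int (m+2) * int ((m+2) choose l) - int (2*m+3) * int ((m+1) choose l)
   + int (m+1) * int (m choose l) =
   (if l = 0 then 0 else int l * int ((m+1) choose (l - 1)))"
proof (cases l)
  case 0 then show ?thesis by simp
next
  case (Suc j)
  have A: "(int (m+1) - int j) * int ((m+1) choose j) = int (j+1) * int ((m+1) choose (j+1))"
    using binom_c_i[of "m+1" j] by simp
  have B: "(int (m+1) - int (j+1)) * int ((m+1) choose (j+1)) = int (m+1) * int (m choose (j+1))"
    using absorb_i[of m "j+1"] by simp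
  have P: "int ((m+2) choose (j+1)) = int ((m+1) choose (j+1)) + int ((m+1) choose j)"
    by (simp add: numeral_2_eq_2)
  have "int (m+2) * int ((m+2) choose l) - int (2*m+3) * int ((m+1) choose l)
   + int (m+1) * int (m choose l) = int l * int ((m+1) choose (l - 1))"
    unfolding Suc using A B P by (simp only: diff_Suc_1 add_diff_cancel_right' Suc_eq_plus1 of_nat_add of_nat_mult of_nat_numeral of_nat_1 of_nat_Suc) algebra
  then show ?thesis using Suc by simp
qed

lemma binom_term:
  "of_nat (m+2) * of_nat ((m+2) choose l) - of_nat (2*m+3) * of_nat ((m+1) choose l)
   + of_nat (m+1) * of_nat (m choose l) =
   (if l = 0 then 0 else of_nat l * of_nat ((m+1) choose (l - 1)) :: complex)"
proof -
  have "(of_int (int (m+2) * int ((m+2) choose l) - int (2*m+3) * int ((m+1) choose l)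
   + int (m+1) * int (m choose l)) :: complex) =
   of_int (if l = 0 then 0 else int l * int ((m+1) choose (l - 1)))"
    using binom_term_i[of m l] by (rule arg_cong)
  then show ?thesis by (cases "l = 0") simp_all
qed


lemma sL_ext: "r \<le> K \<Longrightarrow> sL r = (\<Sum>l\<le>K. of_nat (r choose l) / of_nat (fact l))"
  unfolding sL_def by (rule sum.mono_neutral_left) (auto simp: binomial_eq_0)

lemma sL_rec: "of_nat (m+2) * sL (m+2) = 2 * of_nat (m+2) * sL (m+1) - of_nat (m+1) * sL m"
proof -
  let ?K = "m+2"
  have "of_nat (m+2) * sL (m+2) - of_nat (2*m+3) * sL (m+1) + of_nat (m+1) * sL m
     = (\<Sum>l\<le>?K. (of_nat (m+2) * of_nat ((m+2) choose l) - of_nat (2*m+3) * of_nat ((m+1) choose l)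
   + of_nat (m+1) * of_nat (m choose l)) / of_nat (fact l))"
  proof -
    have e: "(\<Sum>l\<le>?K. (of_nat (m+2) * of_nat ((m+2) choose l) - of_nat (2*m+3) * of_nat ((m+1) choose l)
     + of_nat (m+1) * of_nat (m choose l)) / of_nat (fact l)) =
      of_nat (m+2) * (\<Sum>l\<le>?K. of_nat ((m+2) choose l) / of_nat (fact l))
      - of_nat (2*m+3) * (\<Sum>l\<le>?K. of_nat ((m+1) choose l) / of_nat (fact l))
      + of_nat (m+1) * (\<Sum>l\<le>?K. of_nat (m choose l) / (of_nat (fact l) :: complex))"
      by (simp only: sum_distrib_left sum_subtractf sum.distrib add_divide_distrib diff_divide_distrib times_divide_eq_right)
    have s2: "sL (m+2) = (\<Sum>l\<le>?K. of_nat ((m+2) choose l) / of_nat (fact l))" by (rule sL_ext) simp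
    have s1: "sL (m+1) = (\<Sum>l\<le>?K. of_nat ((m+1) choose l) / of_nat (fact l))" by (rule sL_ext) simp
    have s0: "sL m = (\<Sum>l\<le>?K. of_nat (m choose l) / of_nat (fact l))" by (rule sL_ext) simp
    show ?thesis unfolding e s2 s1 s0 by (rule refl)
  qed
  also have "\<dots> = (\<Sum>l\<le>Suc (m+1). (if l = 0 then 0 else of_nat l * of_nat ((m+1) choose (l - 1))) / of_nat (fact l))"
    by (simp only: binom_term) simp
  also have "\<dots> = (\<Sum>j\<le>m+1. of_nat ((m+1) choose j) / of_nat (fact j))"
  proof -
    have t: "(if Suc j = 0 then 0 else of_nat (Suc j) * of_nat ((m+1) choose (Suc j - 1))) / of_nat (fact (Suc j))
        = (of_nat ((m+1) choose j) / of_nat (fact j) :: complex)" for j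
    proof -
      have f: "(of_nat (fact (Suc j)) :: complex) = of_nat (Suc j) * of_nat (fact j)"
        by (simp only: fact_Suc of_nat_mult of_nat_id)
      have nz: "(of_nat (Suc j) :: complex) \<noteq> 0" by (simp only: of_nat_eq_0_iff Suc_neq_Zero not_False_eq_True)
      show ?thesis unfolding f diff_Suc_1 if_not_P[OF nat.distinct(2)] by (rule nonzero_mult_divide_mult_cancel_left[OF nz])
    qed
    show ?thesis by (simp only: sum.atMost_Suc_shift t) simp
  qed
  also have "\<dots> = sL (m+1)" by (simp add: sL_def)
  finally show ?thesis by (simp add: algebra_simps)
qed

lemma coeff_QL: "coeff (QL n) k = of_nat (n choose k) * sL k * (-1) ^ k"
proof -
  have "coeff (QL n) k = (\<Sum>r\<le>n. if r = k then of_nat (n choose r) * sL r * (-1) ^ r else 0)"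
    unfolding QL_def coeff_sum sL_def by (intro sum.cong) auto
  also have "\<dots> = of_nat (n choose k) * sL k * (-1) ^ k"
    by (cases "k \<le> n") (auto simp: sum.delta)
  finally show ?thesis .
qed

lemma coeff3: "coeff ([:0, 1, -2, 1:] * q) (m+2) =
   coeff q (m+1) - 2 * coeff q m + (if m = 0 then 0 else coeff q (m - 1 :: nat))" for q :: "complex poly"
  by (cases m) (auto simp: coeff_pCons)

lemma coeff2: "coeff ([:a, b, c:] * q) (m+2) = a * coeff q (m+2) + b * coeff q (m+1) + c * coeff q m"
  for q :: "complex poly"
  by (simp add: coeff_pCons)

lemma main_arith:
  fixes n m :: nat and S0 S1 S2 :: complex
  assumes R: "of_nat (m+2) * S2 = 2 * of_nat (m+2) * S1 - of_nat (m+1) * S0"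
  shows "of_nat (n+1) * of_nat (n+1 choose (m+2)) * S2 =
    (of_nat n + of_nat m + 3) * of_nat (n choose (m+2)) * S2 + 2 * of_nat (m+2) * of_nat (n choose (m+1)) * S1
    + (of_nat m - of_nat n) * of_nat (n choose m) * S0"
proof -
  have P: "(of_nat (n+1 choose (m+2)) :: complex) = of_nat (n choose (m+2)) + of_nat (n choose (m+1))"
    by simp
  have B1: "(of_nat n - of_nat (m+1)) * (of_nat (n choose (m+1)) :: complex) = of_nat (m+2) * of_nat (n choose (m+2))"
    using binom_c[of n "m+1"] by simp
  have B2: "(of_nat n - of_nat m) * (of_nat (n choose m) :: complex) = of_nat (m+1) * of_nat (n choose (m+1))"
    using binom_c[of n m] by simp
  have R': "of_nat (n choose (m+1)) * (of_nat (m+2) * S2) = of_nat (n choose (m+1)) * (2 * of_nat (m+2) * S1 - of_nat (m+1) * S0)"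
    using R by simp
  show ?thesis using R' P B1 B2
    by (simp add: algebra_simps)
qed

lemma final_alg:
  fixes n m :: nat and C2' C2 C1 C0 S2 S1 S0 e :: complex
  assumes "of_nat (n+1) * C2' * S2 = (of_nat n + of_nat m + 3) * C2 * S2 + 2 * of_nat (m+2) * C1 * S1 + (of_nat m - of_nat n) * C0 * S0"
  shows "of_nat (n+1) * (C2' * S2 * e) =
    of_nat (m+2) * (C2 * S2 * e) - 2 * (of_nat (m+1) * - (C1 * S1 * e)) + of_nat m * (C0 * S0 * e)
    + ((of_nat n + 1) * (C2 * S2 * e) + - 2 * - (C1 * S1 * e) + - of_nat n * (C0 * S0 * e))"
proof -
  have "of_nat (n+1) * (C2' * S2 * e) = (of_nat (n+1) * C2' * S2) * e" by (simp only: mult.assoc mult.commute mult.left_commute)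
  also have "\<dots> = ((of_nat n + of_nat m + 3) * C2 * S2 + 2 * of_nat (m+2) * C1 * S1 + (of_nat m - of_nat n) * C0 * S0) * e"
    using assms by simp
  also have "\<dots> = of_nat (m+2) * (C2 * S2 * e) - 2 * (of_nat (m+1) * - (C1 * S1 * e)) + of_nat m * (C0 * S0 * e)
    + ((of_nat n + 1) * (C2 * S2 * e) + - 2 * - (C1 * S1 * e) + - of_nat n * (C0 * S0 * e))"
    by (simp add: algebra_simps)
  finally show ?thesis .
qed

lemma coeff_small:
  fixes q :: "complex poly"
  shows "coeff ([:0, 1, -2, 1:] * q) 0 = 0" "coeff ([:0, 1, -2, 1:] * q) 1 = coeff q 0"
    "coeff ([:a, b, c:] * q) 0 = a * coeff q 0" "coeff ([:a, b, c:] * q) 1 = a * coeff q 1 + b * coeff q 0"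
  by (simp_all add: coeff_pCons)

lemma sL01: "sL 0 = 1" "sL 1 = 2" "sL (Suc 0) = 2"
  by (simp_all add: sL_def)

theorem lemma5p2:
  fixes n :: nat
  shows "smult (of_nat (n + 1)) (QL (n + 1)) =
           [:0, 1, -2, 1:] * pderiv (QL n) + [:of_nat n + 1, -2, - of_nat n:] * QL n"
proof (rule poly_eqI)
  fix k
  show "coeff (smult (of_nat (n + 1)) (QL (n + 1))) k =
        coeff ([:0, 1, -2, 1:] * pderiv (QL n) + [:of_nat n + 1, -2, - of_nat n:] * QL n) k"
  proof (cases k)
    case 0
    then show ?thesis by (simp only: coeff_add coeff_small coeff_smult coeff_QL coeff_pderiv sL01) simp
  next
    case (Suc j)
    show ?thesis
    proof (cases j)
      case 0
      then have k1: "k = 1" using Suc by simp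
      show ?thesis unfolding k1 by (simp only: coeff_add coeff_small coeff_smult coeff_QL coeff_pderiv sL01) (simp add: algebra_simps sL01)
    next
      case (Suc m)
      have k: "k = m + 2" using Suc \<open>k = Suc j\<close> by simp
      have x: "(if m = 0 then 0 else coeff (pderiv (QL n)) (m - 1)) = of_nat m * coeff (QL n) m"
        by (cases m) (simp_all add: coeff_pderiv)
      let ?e = "(-1 :: complex) ^ m"
      have h2: "coeff (QL n) (m+2) = of_nat (n choose (m+2)) * sL (m+2) * ?e"
        by (simp add: coeff_QL)
      have h1: "coeff (QL n) (m+1) = - (of_nat (n choose (m+1)) * sL (m+1) * ?e)"
        by (simp add: coeff_QL)
      have h0: "coeff (QL n) m = of_nat (n choose m) * sL m * ?e"
        by (simp add: coeff_QL)
      have hL: "coeff (QL (n+1)) (m+2) = of_nat ((n+1) choose (m+2)) * sL (m+2) * ?e"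
        by (simp only: coeff_QL) simp
      have pd1: "coeff (pderiv (QL n)) (m+1) = of_nat (m+2) * coeff (QL n) (m+2)"
        by (simp only: coeff_pderiv) simp
      have pd0: "coeff (pderiv (QL n)) m = of_nat (m+1) * coeff (QL n) (m+1)"
        by (simp only: coeff_pderiv) simp
      show ?thesis
        unfolding k coeff_add coeff_smult coeff3 coeff2 x pd1 pd0 h2 h1 h0 hL
        by (rule final_alg[OF main_arith[OF sL_rec[of m], of n]])
    qed
  qed
qed

end
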